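(* For every $\Gamma>0$, the function $(\boldsymbol{x}_1,\boldsymbol{x}_2)\mapsto \mathrm{IEM}(\boldsymbol{x}_1,\boldsymbol{x}_2,\Gamma)$ is a distance metric on $\mathbb{R}^d$. That is, for all $\boldsymbol{x}_1,\boldsymbol{x}_2,\boldsymbol{x}_3\in\mathbb{R}^d$: (i) $\mathrm{IEM}(\boldsymbol{x}_1,\boldsymbol{x}_2,\Gamma)=\mathrm{IEM}(\boldsymbol{x}_2,\boldsymbol{x}_1,\Gamma)$; (ii) $\mathrm{IEM}(\boldsymbol{x}_1,\boldsymbol{x}_2,\Gamma)\ge 0$; (iii) $\mathrm{IEM}(\boldsymbol{x}_1,\boldsymbol{x}_2,\Gamma)=0$ if and only if $\boldsymbol{x}_1=\boldsymbol{x}_2$; (iv) $\mathrm{IEM}(\boldsymbol{x}_1,\boldsymbol{x}_3,\Gamma)\le \mathrm{IEM}(\boldsymbol{x}_1,\boldsymbol{x}_2,\Gamma)+\mathrm{IEM}(\boldsymbol{x}_2,\boldsymbol{x}_3,\Gamma)$.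
   Context: Let $\mathbf{x}$ be a random vector in $\mathbb{R}^d$ with probability density $p_{\mathbf{x}}$. For $\gamma\ge 0$ define the Gaussian channel $\mathbf{y}_\gamma=\gamma\mathbf{x}+\mathbf{w}_\gamma$, where $(\mathbf{w}_\gamma)_{\gamma\ge0}$ is a standard Wiener process in $\mathbb{R}^d$ (so $\mathbf{w}_\gamma\sim\mathcal N(\mathbf{0},\gamma \boldsymbol I)$) independent of $\mathbf{x}$. For $\gamma>0$, $p_{\mathbf{y}_\gamma}$ denotes the (smooth, strictly positive) density of $\mathbf{y}_\gamma$, i.e. the density of $\gamma\mathbf{x}$ convolved with the $\mathcal N(\mathbf 0,\gamma \boldsymbol I)$ density, and $\nabla\log p_{\mathbf{y}_\gamma}$ is its score (gradient of its logarithm). The Information-Estimation Metric is $$\mathrm{IEM}(\boldsymbol{x}_1,\boldsymbol{x}_2,\Gamma)=\Big(\int_0^{\Gamma}\mathbb{E}\big[\|\nabla\log p_{\mathbf{y}_\gamma}(\gamma\boldsymbol{x}_1+\mathbf{w}_\gamma)-\nabla\log p_{\mathbf{y}_\gamma}(\gamma\boldsymbol{x}_2+\mathbf{w}_\gamma)\|^2\big]\,d\gamma\Big)^{1/2},$$ where for each $\gamma$ the expectation is over $\mathbf{w}_\gamma\sim\mathcal N(\mathbf 0,\gamma\boldsymbol I)$. It is assumed that this integral is finite for all $\boldsymbol{x}_1,\boldsymbol{x}_2$. *)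

theory Defs
  imports "HOL-Analysis.Analysis"
begin

definition gauss_dens :: "real \<Rightarrow> 'a::euclidean_space \<Rightarrow> real" where
  "gauss_dens \<gamma> w = (2 * pi * \<gamma>) powr (- real DIM('a) / 2) * exp (- (norm w)\<^sup>2 / (2 * \<gamma>))"

definition is_density :: "('a::euclidean_space \<Rightarrow> real) \<Rightarrow> bool" where
  "is_density p \<longleftrightarrow> p \<in> borel_measurable lborel \<and> (\<forall>x. 0 \<le> p x)
      \<and> (\<integral>\<^sup>+ x. ennreal (p x) \<partial>lborel) = 1"

text \<open>Density of y_gamma = gamma x + w_gamma: density of gamma x convolved with N(0, gamma I),
  i.e. p_y(y) = E_x[phi_gamma(y - gamma x)].\<close>
definition py :: "('a::euclidean_space \<Rightarrow> real) \<Rightarrow> real \<Rightarrow> 'a \<Rightarrow> real" where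
  "py p \<gamma> y = (\<integral> x. p x * gauss_dens \<gamma> (y - \<gamma> *\<^sub>R x) \<partial>lborel)"

text \<open>Score: gradient of log p_y (gradient = Riesz representer of the Frechet derivative).\<close>
definition score :: "('a::euclidean_space \<Rightarrow> real) \<Rightarrow> real \<Rightarrow> 'a \<Rightarrow> 'a" where
  "score p \<gamma> y = (\<Sum>b\<in>Basis. frechet_derivative (\<lambda>z. ln (py p \<gamma> z)) (at y) b *\<^sub>R b)"

definition IEM_sq :: "('a::euclidean_space \<Rightarrow> real) \<Rightarrow> 'a \<Rightarrow> 'a \<Rightarrow> real \<Rightarrow> ennreal" where
  "IEM_sq p x1 x2 \<Gamma> = (\<integral>\<^sup>+ \<gamma>. (\<integral>\<^sup>+ w. ennreal (gauss_dens \<gamma> w *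
       (norm (score p \<gamma> (\<gamma> *\<^sub>R x1 + w) - score p \<gamma> (\<gamma> *\<^sub>R x2 + w)))\<^sup>2) \<partial>lborel)
     \<partial>(restrict_space lborel {0<..\<Gamma>}))"

definition IEM :: "('a::euclidean_space \<Rightarrow> real) \<Rightarrow> 'a \<Rightarrow> 'a \<Rightarrow> real \<Rightarrow> real" where
  "IEM p x1 x2 \<Gamma> = sqrt (enn2real (IEM_sq p x1 x2 \<Gamma>))"

end

theory Submission
  imports Defs
begin


definition gc :: "real \<Rightarrow> 'a::euclidean_space itself \<Rightarrow> real" where
  "gc \<gamma> t = (2 * pi * \<gamma>) powr (- real DIM('a) / 2)"

lemma gauss_alt: "gauss_dens \<gamma> (w::'a::euclidean_space) = gc \<gamma> TYPE('a) * exp (- (w \<bullet> w) / (2 * \<gamma>))"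
  by (simp add: gauss_dens_def gc_def power2_norm_eq_inner)

lemma gc_pos: "0 < \<gamma> \<Longrightarrow> 0 < gc \<gamma> t"
  by (simp add: gc_def)

definition dG :: "real \<Rightarrow> 'a::euclidean_space \<Rightarrow> 'a" where
  "dG \<gamma> z = - (gauss_dens \<gamma> z / \<gamma>) *\<^sub>R z"

lemma gauss_pos: "0 < \<gamma> \<Longrightarrow> 0 < gauss_dens \<gamma> (z::'a::euclidean_space)"
  by (simp add: gauss_alt gc_pos)

lemma gauss_le: "0 < \<gamma> \<Longrightarrow> gauss_dens \<gamma> (z::'a::euclidean_space) \<le> gc \<gamma> TYPE('a)"
proof -
  assume g: "0 < \<gamma>"
  have "exp (- (z \<bullet> z) / (2 * \<gamma>)) \<le> 1" using g by simp
  then show ?thesis unfolding gauss_alt using gc_pos[OF g, of "TYPE('a)"]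
    by (simp add: mult_left_le)
qed

lemma gauss_deriv:
  assumes g: "0 < \<gamma>"
  shows "(gauss_dens \<gamma> has_derivative (\<lambda>h. dG \<gamma> z \<bullet> h)) (at (z::'a::euclidean_space))"
proof -
  have eq: "gauss_dens \<gamma> = (\<lambda>w::'a. gc \<gamma> TYPE('a) * exp (- (w \<bullet> w) / (2 * \<gamma>)))"
    by (auto simp: gauss_alt)
  show ?thesis unfolding eq using g
    by (auto intro!: derivative_eq_intros ext simp: dG_def gauss_alt inner_commute field_simps)
qed


lemma exp_bound1: "0 \<le> r \<Longrightarrow> 1 + 2 * r \<le> 2 * exp (r::real)"
  using exp_ge_add_one_self[of r] by linarith

lemma dG_deriv:
  assumes g: "0 < \<gamma>"
  shows "(dG \<gamma> has_derivative (\<lambda>h. - (1/\<gamma>) *\<^sub>R ((dG \<gamma> z \<bullet> h) *\<^sub>R z + gauss_dens \<gamma> z *\<^sub>R h))) (at (z::'a::euclidean_space))"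
proof -
  have eq: "dG \<gamma> = (\<lambda>w::'a. - (1/\<gamma>) *\<^sub>R (gauss_dens \<gamma> w *\<^sub>R w))"
    by (auto simp: dG_def fun_eq_iff)
  have "((\<lambda>w::'a. - (1/\<gamma>) *\<^sub>R (gauss_dens \<gamma> w *\<^sub>R w)) has_derivative (\<lambda>h. - (1/\<gamma>) *\<^sub>R ((dG \<gamma> z \<bullet> h) *\<^sub>R z + gauss_dens \<gamma> z *\<^sub>R h))) (at z)"
    using g by (auto intro!: derivative_eq_intros gauss_deriv[OF g] simp: algebra_simps)
  then show ?thesis by (simp only: eq[symmetric])
qed

lemma norm_dG_eq: "0 < \<gamma> \<Longrightarrow> norm (dG \<gamma> z) = gauss_dens \<gamma> z * norm z / \<gamma>"
  using gauss_pos[of \<gamma> z] by (simp add: dG_def)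

lemma dG_onorm:
  assumes g: "0 < \<gamma>"
  shows "norm (- (1/\<gamma>) *\<^sub>R ((dG \<gamma> z \<bullet> h) *\<^sub>R z + gauss_dens \<gamma> z *\<^sub>R h))
     \<le> (2 * gc \<gamma> TYPE('a) / \<gamma>) * norm (h::'a::euclidean_space)"
proof -
  let ?G = "gauss_dens \<gamma> z" and ?c = "gc \<gamma> TYPE('a)"
  define r where "r = (z \<bullet> z) / (2 * \<gamma>)"
  have r0: "0 \<le> r" using g by (simp add: r_def)
  have Gr: "?G = ?c * exp (- r)" by (simp add: gauss_alt r_def)
  have nz: "(norm z)^2 = 2 * \<gamma> * r" using g by (simp add: r_def power2_norm_eq_inner)
  have "norm ((dG \<gamma> z \<bullet> h) *\<^sub>R z + ?G *\<^sub>R h) \<le> norm ((dG \<gamma> z \<bullet> h) *\<^sub>R z) + norm (?G *\<^sub>R h)"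
    by (rule norm_triangle_ineq)
  also have "norm ((dG \<gamma> z \<bullet> h) *\<^sub>R z) \<le> norm (dG \<gamma> z) * norm h * norm z"
    using Cauchy_Schwarz_ineq2[of "dG \<gamma> z" h] by (simp add: mult_right_mono)
  also have "norm (dG \<gamma> z) * norm h * norm z = ?G * (norm z)^2 / \<gamma> * norm h"
    using g by (simp add: norm_dG_eq power2_eq_square)
  also have "norm (?G *\<^sub>R h) = ?G * norm h" using gauss_pos[OF g, of z] by simp
  finally have A: "norm ((dG \<gamma> z \<bullet> h) *\<^sub>R z + ?G *\<^sub>R h) \<le> ?G * (1 + 2 * r) * norm h"
    using g by (simp add: nz field_simps)
  have "exp (-r) * (1 + 2 * r) \<le> exp (-r) * (2 * exp r)"
    using exp_bound1[OF r0] by (intro mult_left_mono) auto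
  also have "exp (-r) * (2 * exp r) = 2" by (simp add: exp_minus field_simps)
  finally have "exp (-r) * (1 + 2 * r) \<le> 2" .
  then have "?c * (exp (-r) * (1 + 2 * r)) \<le> ?c * 2" using gc_pos[OF g, of "TYPE('a)"] by (intro mult_left_mono) auto
  then have B: "?G * (1 + 2 * r) \<le> 2 * ?c" by (simp add: Gr mult_ac)
  have "norm (- (1/\<gamma>) *\<^sub>R ((dG \<gamma> z \<bullet> h) *\<^sub>R z + ?G *\<^sub>R h)) = (1/\<gamma>) * norm ((dG \<gamma> z \<bullet> h) *\<^sub>R z + ?G *\<^sub>R h)"
    using g by simp
  also have "\<dots> \<le> (1/\<gamma>) * (?G * (1 + 2 * r) * norm h)"
    using A g by (intro mult_left_mono) auto
  also have "\<dots> \<le> (1/\<gamma>) * (2 * ?c * norm h)"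
    using B g by (intro mult_left_mono mult_right_mono) auto
  finally show ?thesis by simp
qed

lemma dG_lipschitz:
  assumes g: "0 < \<gamma>"
  shows "norm (dG \<gamma> x - dG \<gamma> y) \<le> (2 * gc \<gamma> TYPE('a) / \<gamma>) * norm (x - (y::'a::euclidean_space))"
proof (rule differentiable_bound[where S=UNIV])
  fix z :: 'a
  show "(dG \<gamma> has_derivative (\<lambda>h. - (1/\<gamma>) *\<^sub>R ((dG \<gamma> z \<bullet> h) *\<^sub>R z + gauss_dens \<gamma> z *\<^sub>R h))) (at z within UNIV)"
    using dG_deriv[OF g] by simp
  show "onorm (\<lambda>h. - (1/\<gamma>) *\<^sub>R ((dG \<gamma> z \<bullet> h) *\<^sub>R z + gauss_dens \<gamma> z *\<^sub>R h)) \<le> 2 * gc \<gamma> TYPE('a) / \<gamma>"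
    by (rule onorm_bound) (use g gc_pos[OF g, of "TYPE('a)"] dG_onorm[OF g] in auto)
qed auto

lemma dG_bound:
  assumes g: "0 < \<gamma>"
  shows "norm (dG \<gamma> (z::'a::euclidean_space)) \<le> gc \<gamma> TYPE('a) * (1 + 2 * \<gamma>) / \<gamma>"
proof -
  let ?c = "gc \<gamma> TYPE('a)"
  define r where "r = (z \<bullet> z) / (2 * \<gamma>)"
  have r0: "0 \<le> r" using g by (simp add: r_def)
  have Gr: "gauss_dens \<gamma> z = ?c * exp (- r)" by (simp add: gauss_alt r_def)
  have nz: "(norm z)^2 = 2 * \<gamma> * r" using g by (simp add: r_def power2_norm_eq_inner)
  have "norm z \<le> 1 + (norm z)^2"
  proof (cases "norm z \<le> 1")
    case True then show ?thesis by (simp add: add_increasing2)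
  next
    case False then have "norm z * 1 \<le> norm z * norm z" by (intro mult_left_mono) auto
    then show ?thesis by (simp add: power2_eq_square)
  qed
  then have nz2: "norm z \<le> 1 + 2 * \<gamma> * r" using nz by simp
  have "1 + 2 * \<gamma> * r \<le> (1 + 2 * \<gamma>) * (1 + r)" using g r0 by (simp add: field_simps)
  also have "\<dots> \<le> (1 + 2 * \<gamma>) * exp r" using g exp_ge_add_one_self[of r] by (intro mult_left_mono) auto
  finally have "exp (-r) * norm z \<le> exp (-r) * ((1 + 2 * \<gamma>) * exp r)"
    using nz2 by (intro mult_left_mono) auto
  also have "\<dots> = 1 + 2 * \<gamma>" by (simp add: exp_minus field_simps)
  finally have "exp (-r) * norm z \<le> 1 + 2 * \<gamma>" .
  then have "?c * (exp (-r) * norm z) \<le> ?c * (1 + 2 * \<gamma>)" using gc_pos[OF g, of "TYPE('a)"] by (intro mult_left_mono) auto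
  then show ?thesis using g by (simp add: norm_dG_eq Gr divide_right_mono)
qed

lemma gauss_taylor:
  assumes g: "0 < \<gamma>"
  shows "\<bar>gauss_dens \<gamma> (z + h) - gauss_dens \<gamma> z - dG \<gamma> z \<bullet> h\<bar> \<le> (2 * gc \<gamma> TYPE('a) / \<gamma>) * (norm (h::'a::euclidean_space))^2"
proof -
  let ?K = "2 * gc \<gamma> TYPE('a) / \<gamma>"
  have K0: "0 \<le> ?K" using g gc_pos[OF g, of "TYPE('a)"] by simp
  have "norm (gauss_dens \<gamma> (z + h) - gauss_dens \<gamma> z - (\<lambda>k. dG \<gamma> z \<bullet> k) ((z + h) - z)) \<le> norm ((z + h) - z) * (?K * norm h)"
  proof (rule differentiable_bound_linearization[where S="closed_segment z (z + h)" and f'="\<lambda>x k. dG \<gamma> x \<bullet> k"])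
    show "\<And>x. x \<in> closed_segment z (z + h) \<Longrightarrow> (gauss_dens \<gamma> has_derivative (\<lambda>k. dG \<gamma> x \<bullet> k)) (at x within closed_segment z (z + h))"
      using gauss_deriv[OF g] has_derivative_at_withinI by blast
    show "\<And>t. t \<in> {0..1} \<Longrightarrow> z + t *\<^sub>R (z + h - z) \<in> closed_segment z (z + h)"
      by (auto simp: closed_segment_def algebra_simps)
    fix x :: 'a
    assume x: "x \<in> closed_segment z (z + h)"
    have xz: "norm (x - z) \<le> norm h"
      using segment_bound1[OF x] by simp
    show "onorm ((\<lambda>k. dG \<gamma> x \<bullet> k) - (\<lambda>k. dG \<gamma> z \<bullet> k)) \<le> ?K * norm h"
    proof (rule onorm_bound)
      show "0 \<le> ?K * norm h" using K0 by (intro mult_nonneg_nonneg) auto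
      fix k :: 'a
      have "norm (((\<lambda>k. dG \<gamma> x \<bullet> k) - (\<lambda>k. dG \<gamma> z \<bullet> k)) k) = \<bar>(dG \<gamma> x - dG \<gamma> z) \<bullet> k\<bar>"
        by (simp add: inner_diff_left)
      also have "\<dots> \<le> norm (dG \<gamma> x - dG \<gamma> z) * norm k" by (rule Cauchy_Schwarz_ineq2)
      also have "\<dots> \<le> (?K * norm (x - z)) * norm k"
        by (intro mult_right_mono dG_lipschitz[OF g]) auto
      also have "\<dots> \<le> (?K * norm h) * norm k"
        using xz K0 by (intro mult_right_mono mult_left_mono) auto
      finally show "norm (((\<lambda>k. dG \<gamma> x \<bullet> k) - (\<lambda>k. dG \<gamma> z \<bullet> k)) k) \<le> ?K * norm h * norm k" .
    qed
  qed simp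
  then show ?thesis by (simp add: power2_eq_square mult_ac)
qed



lemma gauss_meas[measurable]: "gauss_dens \<gamma> \<in> borel_measurable borel"
  unfolding gauss_dens_def by measurable


lemma dG_meas[measurable]: "dG \<gamma> \<in> borel_measurable borel"
  unfolding dG_def by measurable


lemma density_facts:
  assumes "is_density p"
  shows "p \<in> borel_measurable lborel" "\<And>x. 0 \<le> p x" "integrable lborel p" "(\<integral>x. p x \<partial>lborel) = 1"
proof -
  show pm: "p \<in> borel_measurable lborel" and pn: "\<And>x. 0 \<le> p x" using assms by (auto simp: is_density_def)
  have n1: "(\<integral>\<^sup>+ x. ennreal (p x) \<partial>lborel) = 1" using assms by (auto simp: is_density_def)
  show "integrable lborel p" by (rule integrableI_nonneg) (use pm pn n1 in auto)
  show "(\<integral>x. p x \<partial>lborel) = 1" using integral_eq_nn_integral[OF pm] pn n1 by simp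
qed

definition dpy :: "('a::euclidean_space \<Rightarrow> real) \<Rightarrow> real \<Rightarrow> 'a \<Rightarrow> 'a" where
  "dpy p \<gamma> y = (\<integral> x. p x *\<^sub>R dG \<gamma> (y - \<gamma> *\<^sub>R x) \<partial>lborel)"

locale dens =
  fixes p :: "'a::euclidean_space \<Rightarrow> real"
  assumes isd: "is_density p"
begin

lemma pm[measurable]: "p \<in> borel_measurable borel"
  using density_facts(1)[OF isd] by simp

lemma pn: "0 \<le> p x" using density_facts(2)[OF isd] .
lemma pint: "integrable lborel p" using density_facts(3)[OF isd] .
lemma pone: "(\<integral>x. p x \<partial>lborel) = 1" using density_facts(4)[OF isd] .

lemma int_pG: "0 < \<gamma> \<Longrightarrow> integrable lborel (\<lambda>x. p x * gauss_dens \<gamma> (y - \<gamma> *\<^sub>R x))"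
proof -
  assume g: "0 < \<gamma>"
  have I: "integrable lborel (\<lambda>x. gc \<gamma> TYPE('a) * p x)" using pint by simp
  have B: "norm (p x * gauss_dens \<gamma> (y - \<gamma> *\<^sub>R x)) \<le> norm (gc \<gamma> TYPE('a) * p x)" for x
  proof -
    have "p x * gauss_dens \<gamma> (y - \<gamma> *\<^sub>R x) \<le> p x * gc \<gamma> TYPE('a)"
      using pn[of x] gauss_le[OF g, of "y - \<gamma> *\<^sub>R x"] by (intro mult_left_mono) auto
    moreover have "norm (p x * gauss_dens \<gamma> (y - \<gamma> *\<^sub>R x)) = p x * gauss_dens \<gamma> (y - \<gamma> *\<^sub>R x)"
      using pn[of x] gauss_pos[OF g, of "y - \<gamma> *\<^sub>R x"] by (simp add: abs_mult)
    moreover have "norm (gc \<gamma> TYPE('a) * p x) = p x * gc \<gamma> TYPE('a)"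
      using pn[of x] gc_pos[OF g, of "TYPE('a)"] by (simp add: abs_mult mult.commute[of "gc \<gamma> TYPE('a)"])
    ultimately show ?thesis by linarith
  qed
  show ?thesis
    by (rule Bochner_Integration.integrable_bound[OF I _ AE_I2[OF B]]) measurable
qed

lemma int_pdG: "0 < \<gamma> \<Longrightarrow> integrable lborel (\<lambda>x. p x *\<^sub>R dG \<gamma> (y - \<gamma> *\<^sub>R x))"
proof -
  assume g: "0 < \<gamma>"
  have I: "integrable lborel (\<lambda>x. (gc \<gamma> TYPE('a) * (1 + 2 * \<gamma>) / \<gamma>) * p x)" using pint by simp
  have B: "norm (p x *\<^sub>R dG \<gamma> (y - \<gamma> *\<^sub>R x)) \<le> norm ((gc \<gamma> TYPE('a) * (1 + 2 * \<gamma>) / \<gamma>) * p x)" for x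
  proof -
    have "p x * norm (dG \<gamma> (y - \<gamma> *\<^sub>R x)) \<le> p x * (gc \<gamma> TYPE('a) * (1 + 2 * \<gamma>) / \<gamma>)"
      using pn[of x] dG_bound[OF g, of "y - \<gamma> *\<^sub>R x"] by (intro mult_left_mono) auto
    moreover have "norm (p x *\<^sub>R dG \<gamma> (y - \<gamma> *\<^sub>R x)) = p x * norm (dG \<gamma> (y - \<gamma> *\<^sub>R x))"
      using pn[of x] by simp
    moreover have "norm ((gc \<gamma> TYPE('a) * (1 + 2 * \<gamma>) / \<gamma>) * p x) = p x * (gc \<gamma> TYPE('a) * (1 + 2 * \<gamma>) / \<gamma>)"
      using pn[of x] gc_pos[OF g, of "TYPE('a)"] g by (simp add: abs_mult mult.commute[of _ "p x"])
    ultimately show ?thesis by linarith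
  qed
  show ?thesis
    by (rule Bochner_Integration.integrable_bound[OF I _ AE_I2[OF B]]) measurable
qed

lemma int_pK: "integrable lborel (\<lambda>x. p x * K)"
  using pint by simp

lemma py_deriv_bound:
  assumes g: "0 < \<gamma>"
  shows "\<bar>py p \<gamma> (y + h) - py p \<gamma> y - dpy p \<gamma> y \<bullet> h\<bar> \<le> (2 * gc \<gamma> TYPE('a) / \<gamma>) * (norm h)^2"
proof -
  let ?K = "2 * gc \<gamma> TYPE('a) / \<gamma>"
  let ?A = "\<lambda>x. p x * gauss_dens \<gamma> (y + h - \<gamma> *\<^sub>R x) - p x * gauss_dens \<gamma> (y - \<gamma> *\<^sub>R x)"
  let ?B = "\<lambda>x. (p x *\<^sub>R dG \<gamma> (y - \<gamma> *\<^sub>R x)) \<bullet> h"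
  have i3: "integrable lborel ?B"
    using int_pdG[OF g] by (intro integrable_inner_left) auto
  have iA: "integrable lborel ?A" using int_pG[OF g] by auto
  have e1: "(\<integral>x. ?B x \<partial>lborel) = dpy p \<gamma> y \<bullet> h"
    unfolding dpy_def by (rule integral_inner_left) (use int_pdG[OF g] in auto)
  have e2: "py p \<gamma> (y + h) - py p \<gamma> y = (\<integral>x. ?A x \<partial>lborel)"
    unfolding py_def using int_pG[OF g] by (subst Bochner_Integration.integral_diff) auto
  have e3: "(\<integral>x. ?A x - ?B x \<partial>lborel) = (\<integral>x. ?A x \<partial>lborel) - (\<integral>x. ?B x \<partial>lborel)"
    by (rule Bochner_Integration.integral_diff[OF iA i3])
  have X: "py p \<gamma> (y + h) - py p \<gamma> y - dpy p \<gamma> y \<bullet> h = (\<integral>x. ?A x - ?B x \<partial>lborel)"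
    unfolding e3 e2 e1 ..
  have N: "norm (\<integral>x. ?A x - ?B x \<partial>lborel) \<le> (\<integral>x. p x * (?K * (norm h)^2) \<partial>lborel)"
  proof (rule Bochner_Integration.integral_norm_bound_integral)
    show "integrable lborel (\<lambda>x. ?A x - ?B x)"
      using iA i3 by (rule Bochner_Integration.integrable_diff)
    show "integrable lborel (\<lambda>x. p x * (?K * (norm h)^2))" by (rule int_pK)
    fix x :: 'a
    have e: "?A x - ?B x = p x * (gauss_dens \<gamma> ((y - \<gamma> *\<^sub>R x) + h) - gauss_dens \<gamma> (y - \<gamma> *\<^sub>R x)
          - dG \<gamma> (y - \<gamma> *\<^sub>R x) \<bullet> h)"
      by (simp add: algebra_simps)
    have t: "\<bar>gauss_dens \<gamma> ((y - \<gamma> *\<^sub>R x) + h) - gauss_dens \<gamma> (y - \<gamma> *\<^sub>R x)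
          - dG \<gamma> (y - \<gamma> *\<^sub>R x) \<bullet> h\<bar> \<le> ?K * (norm h)^2"
      by (rule gauss_taylor[OF g])
    have "norm (?A x - ?B x) = p x * \<bar>gauss_dens \<gamma> ((y - \<gamma> *\<^sub>R x) + h) - gauss_dens \<gamma> (y - \<gamma> *\<^sub>R x)
          - dG \<gamma> (y - \<gamma> *\<^sub>R x) \<bullet> h\<bar>"
      unfolding e real_norm_def abs_mult using pn[of x] by simp
    also have "\<dots> \<le> p x * (?K * (norm h)^2)"
      by (rule mult_left_mono[OF t pn])
    finally show "norm (?A x - ?B x) \<le> p x * (?K * (norm h)^2)" .
  qed
  have V: "(\<integral>x. p x * (?K * (norm h)^2) \<partial>lborel) = ?K * (norm h)^2" using pone by simp
  have "\<bar>py p \<gamma> (y + h) - py p \<gamma> y - dpy p \<gamma> y \<bullet> h\<bar> = norm (\<integral>x. ?A x - ?B x \<partial>lborel)"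
    by (simp only: X real_norm_def)
  then show ?thesis using N V by linarith
qed

lemma py_has_deriv:
  assumes g: "0 < \<gamma>"
  shows "(py p \<gamma> has_derivative (\<lambda>h. dpy p \<gamma> y \<bullet> h)) (at y)"
  unfolding has_derivative_within_alt
proof (intro conjI allI impI)
  show "bounded_linear (\<lambda>h. dpy p \<gamma> y \<bullet> h)" by (rule bounded_linear_inner_right)
  fix e :: real assume e: "0 < e"
  define K where "K = 2 * gc \<gamma> TYPE('a) / \<gamma>"
  have K: "0 < K" using g gc_pos[OF g, of "TYPE('a)"] unfolding K_def by simp
  show "\<exists>d>0. \<forall>z\<in>UNIV. norm (z - y) < d \<longrightarrow> norm (py p \<gamma> z - py p \<gamma> y - dpy p \<gamma> y \<bullet> (z - y)) \<le> e * norm (z - y)"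
  proof (intro exI[of _ "e / K"] conjI ballI impI)
    show "0 < e / K" by (rule divide_pos_pos[OF e K])
    fix z assume "z \<in> (UNIV::'a set)" and z: "norm (z - y) < e / K"
    have "norm (py p \<gamma> z - py p \<gamma> y - dpy p \<gamma> y \<bullet> (z - y)) \<le> K * (norm (z - y))^2"
      using py_deriv_bound[OF g, of y "z - y"] unfolding K_def by simp
    also have "\<dots> = (K * norm (z - y)) * norm (z - y)" by (simp add: power2_eq_square)
    also have "\<dots> \<le> e * norm (z - y)"
    proof (rule mult_right_mono)
      have "K * norm (z - y) \<le> K * (e / K)" using z K by (intro mult_left_mono) auto
      then show "K * norm (z - y) \<le> e" using K by simp
    qed simp
    finally show "norm (py p \<gamma> z - py p \<gamma> y - dpy p \<gamma> y \<bullet> (z - y)) \<le> e * norm (z - y)" .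
  qed
qed

lemma dpy_lip:
  assumes g: "0 < \<gamma>"
  shows "norm (dpy p \<gamma> y - dpy p \<gamma> y') \<le> (2 * gc \<gamma> TYPE('a) / \<gamma>) * norm (y - y')"
proof -
  let ?K = "2 * gc \<gamma> TYPE('a) / \<gamma>"
  have "dpy p \<gamma> y - dpy p \<gamma> y' = (\<integral>x. p x *\<^sub>R dG \<gamma> (y - \<gamma> *\<^sub>R x) - p x *\<^sub>R dG \<gamma> (y' - \<gamma> *\<^sub>R x) \<partial>lborel)"
    unfolding dpy_def by (rule Bochner_Integration.integral_diff[symmetric, OF int_pdG[OF g] int_pdG[OF g]])
  also have "norm \<dots> \<le> (\<integral>x. p x * (?K * norm (y - y')) \<partial>lborel)"
  proof (rule Bochner_Integration.integral_norm_bound_integral)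
    show "integrable lborel (\<lambda>x. p x *\<^sub>R dG \<gamma> (y - \<gamma> *\<^sub>R x) - p x *\<^sub>R dG \<gamma> (y' - \<gamma> *\<^sub>R x))"
      by (rule Bochner_Integration.integrable_diff[OF int_pdG[OF g] int_pdG[OF g]])
    show "integrable lborel (\<lambda>x. p x * (?K * norm (y - y')))" by (rule int_pK)
    fix x :: 'a
    have "norm (p x *\<^sub>R dG \<gamma> (y - \<gamma> *\<^sub>R x) - p x *\<^sub>R dG \<gamma> (y' - \<gamma> *\<^sub>R x))
        = p x * norm (dG \<gamma> (y - \<gamma> *\<^sub>R x) - dG \<gamma> (y' - \<gamma> *\<^sub>R x))"
      using pn[of x] by (simp add: scaleR_diff_right[symmetric])
    also have "\<dots> \<le> p x * (?K * norm ((y - \<gamma> *\<^sub>R x) - (y' - \<gamma> *\<^sub>R x)))"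
      by (rule mult_left_mono[OF dG_lipschitz[OF g] pn])
    finally show "norm (p x *\<^sub>R dG \<gamma> (y - \<gamma> *\<^sub>R x) - p x *\<^sub>R dG \<gamma> (y' - \<gamma> *\<^sub>R x)) \<le> p x * (?K * norm (y - y'))"
      by simp
  qed
  also have "(\<integral>x. p x * (?K * norm (y - y')) \<partial>lborel) = ?K * norm (y - y')" using pone by simp
  finally show ?thesis .
qed

lemma dpy_cont: "0 < \<gamma> \<Longrightarrow> continuous_on UNIV (dpy p \<gamma>)"
proof -
  assume g: "0 < \<gamma>"
  define K where "K = 2 * gc \<gamma> TYPE('a) / \<gamma>"
  have K: "0 < K" using g gc_pos[OF g, of "TYPE('a)"] unfolding K_def by simp
  show ?thesis unfolding continuous_on_iff
  proof (intro ballI allI impI)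
    fix x and e :: real assume e: "0 < e"
    show "\<exists>d>0. \<forall>x'\<in>UNIV. dist x' x < d \<longrightarrow> dist (dpy p \<gamma> x') (dpy p \<gamma> x) < e"
    proof (intro exI[of _ "e / K"] conjI ballI impI)
      show "0 < e / K" by (rule divide_pos_pos[OF e K])
      fix x' assume "x' \<in> (UNIV :: 'a set)" "dist x' x < e / K"
      then have "K * norm (x' - x) < e" using K by (simp add: dist_norm pos_less_divide_eq mult.commute)
      then show "dist (dpy p \<gamma> x') (dpy p \<gamma> x) < e"
        using dpy_lip[OF g, of x' x] unfolding K_def by (simp add: dist_norm)
    qed
  qed
qed

lemma py_pos:
  assumes g: "0 < \<gamma>"
  shows "0 < py p \<gamma> y"
proof -
  have nn: "0 \<le> p x * gauss_dens \<gamma> (y - \<gamma> *\<^sub>R x)" for x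
    using pn[of x] gauss_pos[OF g, of "y - \<gamma> *\<^sub>R x"] by simp
  have ge: "0 \<le> py p \<gamma> y" unfolding py_def by (rule Bochner_Integration.integral_nonneg) (use nn in auto)
  have "py p \<gamma> y \<noteq> 0"
  proof
    assume "py p \<gamma> y = 0"
    then have "AE x in lborel. p x * gauss_dens \<gamma> (y - \<gamma> *\<^sub>R x) = 0"
      unfolding py_def using integral_nonneg_eq_0_iff_AE[OF int_pG[OF g] AE_I2[OF nn]] by simp
    moreover have z: "p x * gauss_dens \<gamma> (y - \<gamma> *\<^sub>R x) = 0 \<Longrightarrow> p x = 0" for x
      using gauss_pos[OF g, of "y - \<gamma> *\<^sub>R x"] by simp
    ultimately have "AE x in lborel. p x = 0"
      by (metis (mono_tags, lifting) AE_mp AE_I2)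
    then have "(\<integral>x. p x \<partial>lborel) = 0"
      by (rule integral_eq_zero_AE)
    then show False using pone by simp
  qed
  then show ?thesis using ge by simp
qed

lemma lnpy_deriv:
  assumes g: "0 < \<gamma>"
  shows "((\<lambda>z. ln (py p \<gamma> z)) has_derivative (\<lambda>h. (dpy p \<gamma> y \<bullet> h) / py p \<gamma> y)) (at y)"
  using py_pos[OF g, of y]
  by (auto intro!: derivative_eq_intros py_has_deriv[OF g] ext simp: divide_inverse)

lemma score_eq:
  assumes g: "0 < \<gamma>"
  shows "score p \<gamma> y = (1 / py p \<gamma> y) *\<^sub>R dpy p \<gamma> y"
proof -
  have "frechet_derivative (\<lambda>z. ln (py p \<gamma> z)) (at y) = (\<lambda>h. (dpy p \<gamma> y \<bullet> h) / py p \<gamma> y)"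
    using frechet_derivative_at[OF lnpy_deriv[OF g]] by simp
  then have "score p \<gamma> y = (\<Sum>b\<in>Basis. ((1 / py p \<gamma> y) * (dpy p \<gamma> y \<bullet> b)) *\<^sub>R b)"
    unfolding score_def by simp
  also have "\<dots> = (1 / py p \<gamma> y) *\<^sub>R (\<Sum>b\<in>Basis. (dpy p \<gamma> y \<bullet> b) *\<^sub>R b)"
    by (simp add: scaleR_sum_right)
  also have "\<dots> = (1 / py p \<gamma> y) *\<^sub>R dpy p \<gamma> y" by (simp add: euclidean_representation)
  finally show ?thesis .
qed

lemma py_cont: "0 < \<gamma> \<Longrightarrow> continuous_on UNIV (py p \<gamma>)"
  by (intro continuous_at_imp_continuous_on ballI has_derivative_continuous[OF py_has_deriv])

lemma score_cont: "0 < \<gamma> \<Longrightarrow> continuous_on UNIV (score p \<gamma>)"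
proof -
  assume g: "0 < \<gamma>"
  have "continuous_on UNIV (\<lambda>y. (1 / py p \<gamma> y) *\<^sub>R dpy p \<gamma> y)"
    using py_pos[OF g] by (intro continuous_intros py_cont[OF g] dpy_cont[OF g]) (metis less_irrefl)
  then show ?thesis using score_eq[OF g] by simp
qed

end



lemma gauss_meas_raw[measurable (raw)]:
  "f \<in> borel_measurable M \<Longrightarrow> g \<in> borel_measurable M \<Longrightarrow> (\<lambda>x. gauss_dens (f x) (g x :: 'a::euclidean_space)) \<in> borel_measurable M"
proof -
  assume f: "f \<in> borel_measurable M" and g: "g \<in> borel_measurable M"
  have c: "(\<lambda>x. - real DIM('a) / 2) \<in> borel_measurable M" by (rule borel_measurable_const)
  have e: "(\<lambda>x. - (norm (g x))\<^sup>2 / (2 * f x)) \<in> borel_measurable M" using f g by measurable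
  have e2: "(\<lambda>x. exp (- (norm (g x))\<^sup>2 / (2 * f x))) \<in> borel_measurable M"
    using measurable_compose[OF e borel_measurable_exp] by (simp add: o_def)
  have p: "(\<lambda>x. (2 * pi * f x) powr (- real DIM('a) / 2)) \<in> borel_measurable M"
    using f c by measurable
  show ?thesis unfolding gauss_dens_def using p e2 by measurable
qed

lemma dG_meas_raw[measurable (raw)]:
  "f \<in> borel_measurable M \<Longrightarrow> g \<in> borel_measurable M \<Longrightarrow> (\<lambda>x. dG (f x) (g x :: 'a::euclidean_space)) \<in> borel_measurable M"
proof -
  assume [measurable]: "f \<in> borel_measurable M" "g \<in> borel_measurable M"
  show ?thesis unfolding dG_def by measurable
qed

context dens
begin

lemma py_meas_raw[measurable (raw)]:
  "f \<in> borel_measurable M \<Longrightarrow> g \<in> borel_measurable M \<Longrightarrow> (\<lambda>x. py p (f x) (g x)) \<in> borel_measurable M"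
proof -
  assume [measurable]: "f \<in> borel_measurable M" "g \<in> borel_measurable M"
  show ?thesis unfolding py_def by measurable
qed

lemma dpy_meas_raw[measurable (raw)]:
  "f \<in> borel_measurable M \<Longrightarrow> g \<in> borel_measurable M \<Longrightarrow> (\<lambda>x. dpy p (f x) (g x)) \<in> borel_measurable M"
proof -
  assume [measurable]: "f \<in> borel_measurable M" "g \<in> borel_measurable M"
  show ?thesis unfolding dpy_def by measurable
qed

end

lemma norm_seq_at_top:
  fixes a d :: "'a::real_normed_vector"
  assumes k: "0 < k" and d: "d \<noteq> 0"
  shows "filterlim (\<lambda>n::nat. norm (a + (real n * k) *\<^sub>R d)) at_top sequentially"
proof -
  have kd: "0 < k * norm d" using k d by simp
  have "filterlim (\<lambda>n::nat. (k * norm d) * real n) at_top sequentially"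
    by (rule filterlim_tendsto_pos_mult_at_top[where f="\<lambda>_. k * norm d", OF tendsto_const kd filterlim_real_sequentially])
  then have "filterlim (\<lambda>n::nat. - norm a + (k * norm d) * real n) at_top sequentially"
    by (rule filterlim_tendsto_add_at_top[where f="\<lambda>_. - norm a", OF tendsto_const])
  moreover have "\<forall>n. - norm a + (k * norm d) * real n \<le> norm (a + (real n * k) *\<^sub>R d)"
  proof
    fix n :: nat
    have "norm ((real n * k) *\<^sub>R d) \<le> norm (a + (real n * k) *\<^sub>R d) + norm a"
      using norm_triangle_ineq4[of "a + (real n * k) *\<^sub>R d" a] by simp
    moreover have "norm ((real n * k) *\<^sub>R d) = (k * norm d) * real n" using k by simp
    ultimately show "- norm a + (k * norm d) * real n \<le> norm (a + (real n * k) *\<^sub>R d)" by linarith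
  qed
  ultimately show ?thesis by (rule filterlim_at_top_mono[OF _ always_eventually])
qed

lemma gauss_decay:
  assumes g: "0 < \<gamma>" and u: "filterlim (\<lambda>n. norm (z n)) at_top F"
  shows "((\<lambda>n. gauss_dens \<gamma> (z n :: 'a::euclidean_space)) \<longlongrightarrow> 0) F"
proof -
  have u2: "filterlim (\<lambda>n. (norm (z n))^2) at_top F" by (rule filterlim_pow_at_top[OF _ u]) simp
  have "filterlim (\<lambda>n. (1 / (2 * \<gamma>)) * (norm (z n))^2) at_top F"
    using filterlim_tendsto_pos_mult_at_top[where f="\<lambda>_. 1 / (2 * \<gamma>)" and c="1 / (2 * \<gamma>)", OF tendsto_const _ u2] g by simp
  then have "filterlim (\<lambda>n. - ((1 / (2 * \<gamma>)) * (norm (z n))^2)) at_bot F"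
    by (simp add: filterlim_uminus_at_top)
  then have "((\<lambda>n. exp (- ((1 / (2 * \<gamma>)) * (norm (z n))^2))) \<longlongrightarrow> 0) F"
    by (rule filterlim_compose[OF exp_at_bot])
  then have "((\<lambda>n. gc \<gamma> TYPE('a) * exp (- ((1 / (2 * \<gamma>)) * (norm (z n))^2))) \<longlongrightarrow> gc \<gamma> TYPE('a) * 0) F"
    by (rule tendsto_mult[OF tendsto_const])
  then show ?thesis by (simp add: gauss_dens_def gc_def)
qed

context dens
begin

lemma py_decay:
  assumes g: "0 < \<gamma>" and d: "d \<noteq> 0"
  shows "(\<lambda>n::nat. py p \<gamma> (y0 + (real n * \<gamma>) *\<^sub>R d)) \<longlonglongrightarrow> 0"
proof -
  have "(\<lambda>n::nat. \<integral>x. p x * gauss_dens \<gamma> (y0 + (real n * \<gamma>) *\<^sub>R d - \<gamma> *\<^sub>R x) \<partial>lborel) \<longlonglongrightarrow> (\<integral>x. 0 \<partial>(lborel :: 'a measure))"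
  proof (rule Bochner_Integration.integral_dominated_convergence[where w="\<lambda>x. gc \<gamma> TYPE('a) * p x" and f="\<lambda>x. 0"
      and s="\<lambda>n x. p x * gauss_dens \<gamma> (y0 + (real n * \<gamma>) *\<^sub>R d - \<gamma> *\<^sub>R x)" and M=lborel])
    show "(\<lambda>x. 0::real) \<in> borel_measurable lborel" by simp
    show "\<And>n. (\<lambda>x. p x * gauss_dens \<gamma> (y0 + (real n * \<gamma>) *\<^sub>R d - \<gamma> *\<^sub>R x)) \<in> borel_measurable lborel"
      by measurable
    show "integrable lborel (\<lambda>x. gc \<gamma> TYPE('a) * p x)" using pint by simp
    show "AE x in lborel. (\<lambda>n. p x * gauss_dens \<gamma> (y0 + (real n * \<gamma>) *\<^sub>R d - \<gamma> *\<^sub>R x)) \<longlonglongrightarrow> 0"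
    proof (rule AE_I2)
      fix x
      have "filterlim (\<lambda>n::nat. norm ((y0 - \<gamma> *\<^sub>R x) + (real n * \<gamma>) *\<^sub>R d)) at_top sequentially"
        by (rule norm_seq_at_top[OF g d])
      then have "(\<lambda>n::nat. gauss_dens \<gamma> ((y0 - \<gamma> *\<^sub>R x) + (real n * \<gamma>) *\<^sub>R d)) \<longlonglongrightarrow> 0"
        by (rule gauss_decay[OF g])
      then have "(\<lambda>n::nat. p x * gauss_dens \<gamma> ((y0 - \<gamma> *\<^sub>R x) + (real n * \<gamma>) *\<^sub>R d)) \<longlonglongrightarrow> p x * 0"
        by (rule tendsto_mult[OF tendsto_const])
      moreover have "(y0 - \<gamma> *\<^sub>R x) + (real n * \<gamma>) *\<^sub>R d = y0 + (real n * \<gamma>) *\<^sub>R d - \<gamma> *\<^sub>R x" for n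
        by (simp add: algebra_simps)
      ultimately show "(\<lambda>n. p x * gauss_dens \<gamma> (y0 + (real n * \<gamma>) *\<^sub>R d - \<gamma> *\<^sub>R x)) \<longlonglongrightarrow> 0"
        by simp
    qed
    fix n :: nat
    show "AE x in lborel. norm (p x * gauss_dens \<gamma> (y0 + (real n * \<gamma>) *\<^sub>R d - \<gamma> *\<^sub>R x)) \<le> gc \<gamma> TYPE('a) * p x"
    proof (rule AE_I2)
      fix x
      let ?z = "y0 + (real n * \<gamma>) *\<^sub>R d - \<gamma> *\<^sub>R x"
      have "p x * gauss_dens \<gamma> ?z \<le> p x * gc \<gamma> TYPE('a)"
        using pn[of x] gauss_le[OF g, of ?z] by (intro mult_left_mono) auto
      moreover have "norm (p x * gauss_dens \<gamma> ?z) = p x * gauss_dens \<gamma> ?z"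
        using pn[of x] gauss_pos[OF g, of ?z] by (simp add: abs_mult)
      ultimately show "norm (p x * gauss_dens \<gamma> ?z) \<le> gc \<gamma> TYPE('a) * p x"
        by (simp add: mult.commute[of "gc \<gamma> TYPE('a)"])
    qed
  qed
  then show ?thesis unfolding py_def by simp
qed

lemma score_inner: "0 < \<gamma> \<Longrightarrow> (dpy p \<gamma> y \<bullet> h) / py p \<gamma> y = score p \<gamma> y \<bullet> h"
  by (simp add: score_eq)

lemma shift_const:
  assumes g: "0 < \<gamma>" and per: "\<And>y. score p \<gamma> (y + v) = score p \<gamma> y"
  shows "\<exists>c. \<forall>y. ln (py p \<gamma> (y + v)) - ln (py p \<gamma> y) = c"
proof -
  have "\<exists>c. \<forall>y\<in>UNIV. ln (py p \<gamma> (y + v)) - ln (py p \<gamma> y) = c"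
  proof (rule has_derivative_zero_constant[OF convex_UNIV])
    fix y :: 'a assume "y \<in> UNIV"
    have d1: "((\<lambda>z. ln (py p \<gamma> (z + v))) has_derivative (\<lambda>h. (dpy p \<gamma> (y + v) \<bullet> h) / py p \<gamma> (y + v))) (at y)"
    proof -
      have "((\<lambda>z. z + v) has_derivative (\<lambda>h. h)) (at y)" by (auto intro!: derivative_eq_intros)
      from has_derivative_compose[OF this lnpy_deriv[OF g, of "y + v"]] show ?thesis by simp
    qed
    have "((\<lambda>z. ln (py p \<gamma> (z + v)) - ln (py p \<gamma> z)) has_derivative
        (\<lambda>h. (dpy p \<gamma> (y + v) \<bullet> h) / py p \<gamma> (y + v) - (dpy p \<gamma> y \<bullet> h) / py p \<gamma> y)) (at y)"
      by (rule has_derivative_diff[OF d1 lnpy_deriv[OF g]])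
    moreover have "(\<lambda>h. (dpy p \<gamma> (y + v) \<bullet> h) / py p \<gamma> (y + v) - (dpy p \<gamma> y \<bullet> h) / py p \<gamma> y) = (\<lambda>h. 0)"
      using per[of y] by (simp add: score_inner[OF g])
    ultimately show "((\<lambda>z. ln (py p \<gamma> (z + v)) - ln (py p \<gamma> z)) has_derivative (\<lambda>h. 0)) (at y within UNIV)"
      by simp
  qed
  then show ?thesis by simp
qed

lemma no_periodic_score:
  assumes g: "0 < \<gamma>" and d: "d \<noteq> 0" and per: "\<And>y. score p \<gamma> (y + \<gamma> *\<^sub>R d) = score p \<gamma> y"
  shows False
proof -
  obtain c where c: "\<And>y. ln (py p \<gamma> (y + \<gamma> *\<^sub>R d)) - ln (py p \<gamma> y) = c"
    using shift_const[OF g per] by blast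
  define y0 :: 'a where "y0 = 0"
  have up: "ln (py p \<gamma> (y0 + (real n * \<gamma>) *\<^sub>R d)) = ln (py p \<gamma> y0) + real n * c" for n
  proof (induction n)
    case 0 then show ?case by simp
  next
    case (Suc n)
    have "y0 + (real (Suc n) * \<gamma>) *\<^sub>R d = (y0 + (real n * \<gamma>) *\<^sub>R d) + \<gamma> *\<^sub>R d"
      by (simp add: algebra_simps)
    then show ?case using c[of "y0 + (real n * \<gamma>) *\<^sub>R d"] Suc by (simp add: algebra_simps)
  qed
  have down: "ln (py p \<gamma> (y0 + (real n * \<gamma>) *\<^sub>R (- d))) = ln (py p \<gamma> y0) - real n * c" for n
  proof (induction n)
    case 0 then show ?case by simp
  next
    case (Suc n)
    have "y0 + (real n * \<gamma>) *\<^sub>R (- d) = (y0 + (real (Suc n) * \<gamma>) *\<^sub>R (- d)) + \<gamma> *\<^sub>R d"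
      by (simp add: algebra_simps)
    then show ?case using c[of "y0 + (real (Suc n) * \<gamma>) *\<^sub>R (- d)"] Suc by (simp add: algebra_simps)
  qed
  have pos0: "0 < py p \<gamma> y0" by (rule py_pos[OF g])
  obtain e where e: "e \<in> {d, - d}" and ge: "\<And>n. py p \<gamma> y0 \<le> py p \<gamma> (y0 + (real n * \<gamma>) *\<^sub>R e)"
  proof (cases "0 \<le> c")
    case True
    have "py p \<gamma> y0 \<le> py p \<gamma> (y0 + (real n * \<gamma>) *\<^sub>R d)" for n
    proof -
      have "ln (py p \<gamma> y0) \<le> ln (py p \<gamma> (y0 + (real n * \<gamma>) *\<^sub>R d))" using up[of n] True by simp
      then show ?thesis using pos0 py_pos[OF g] by simp
    qed
    then show ?thesis using that[of d] by simp
  next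
    case False
    have "py p \<gamma> y0 \<le> py p \<gamma> (y0 + (real n * \<gamma>) *\<^sub>R (- d))" for n
    proof -
      have "0 \<le> real n * (- c)" using False by (intro mult_nonneg_nonneg) auto
      then have "ln (py p \<gamma> y0) \<le> ln (py p \<gamma> (y0 + (real n * \<gamma>) *\<^sub>R (- d)))" using down[of n] by simp
      then show ?thesis using pos0 py_pos[OF g] by simp
    qed
    then show ?thesis using that[of "- d"] by simp
  qed
  have "e \<noteq> 0" using e d by auto
  from py_decay[OF g this, of y0] pos0 have "eventually (\<lambda>n. py p \<gamma> (y0 + (real n * \<gamma>) *\<^sub>R e) < py p \<gamma> y0) sequentially"
    by (rule order_tendstoD)
  then obtain n where "py p \<gamma> (y0 + (real n * \<gamma>) *\<^sub>R e) < py p \<gamma> y0" by (auto simp: eventually_sequentially)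
  with ge[of n] show False by simp
qed

end



lemma cont_ae_eq:
  fixes f g :: "'a::euclidean_space \<Rightarrow> 'b::euclidean_space"
  assumes f: "continuous_on UNIV f" and g: "continuous_on UNIV g"
    and ae: "AE x in lborel. f x = g x"
  shows "f x = g x"
proof (rule ccontr)
  assume ne: "f x \<noteq> g x"
  let ?U = "{x. f x \<noteq> g x}"
  have op: "open ?U" by (rule open_Collect_neq[OF f g])
  have Us: "?U \<in> sets lborel" using borel_open[OF op] by simp
  have "{x\<in>space lborel. \<not> (f x = g x)} \<in> null_sets lborel"
    using ae AE_iff_null[of lborel "\<lambda>x. f x = g x"] Us by simp
  then have "?U \<in> null_sets lborel" by simp
  then have "?U \<in> null_sets lebesgue" by (rule null_sets_completionI)
  then have "negligible ?U" by (simp add: negligible_iff_null_sets)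
  moreover have "?U \<noteq> {}" using ne by auto
  ultimately show False using open_not_negligible[OF op] by blast
qed

lemma sqrt_tri_real:
  fixes a b c :: real
  assumes a: "0 \<le> a" and b: "0 \<le> b" and c: "0 \<le> c"
    and H: "\<And>t. 0 < t \<Longrightarrow> c \<le> (1 + t) * a + (1 + 1 / t) * b"
  shows "sqrt c \<le> sqrt a + sqrt b"
proof (cases "a = 0")
  case True
  have "c \<le> b"
  proof (rule ccontr)
    assume "\<not> c \<le> b"
    then have cb: "0 < c - b" by simp
    define t where "t = (b + 1) / (c - b)"
    have t: "0 < t" using cb b by (simp add: t_def)
    have "(1 / t) * b = b * (c - b) / (b + 1)" using cb b by (simp add: t_def)
    also have "\<dots> < c - b"
    proof -
      have "b * (c - b) < (b + 1) * (c - b)" using cb by (intro mult_strict_right_mono) auto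
      then show ?thesis using b by (simp add: divide_less_eq mult.commute)
    qed
    finally have "c > b + (1 / t) * b" by simp
    moreover have "c \<le> b + (1 / t) * b" using H[OF t] True by (simp add: algebra_simps)
    ultimately show False by simp
  qed
  then show ?thesis using True by (simp add: real_sqrt_le_mono)
next
  case False
  then have a0: "0 < a" using a by simp
  show ?thesis
  proof (cases "b = 0")
    case True
    have "c \<le> a"
    proof (rule ccontr)
      assume "\<not> c \<le> a"
      then have ca: "0 < c - a" by simp
      define t where "t = (c - a) / (2 * (a + 1))"
      have t: "0 < t" using ca a by (simp add: t_def)
      have "t * a = a * (c - a) / (2 * (a + 1))" by (simp add: t_def)
      also have "\<dots> < c - a"
      proof -
        have "a * (c - a) < (2 * (a + 1)) * (c - a)" using ca a by (intro mult_strict_right_mono) auto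
        then show ?thesis using a by (simp add: divide_less_eq mult.commute)
      qed
      finally have "c > a + t * a" by simp
      moreover have "c \<le> a + t * a" using H[OF t] True by (simp add: algebra_simps)
      ultimately show False by simp
    qed
    then show ?thesis using True by (simp add: real_sqrt_le_mono)
  next
    case False
    then have b0: "0 < b" using b by simp
    define t where "t = sqrt b / sqrt a"
    have t: "0 < t" using a0 b0 by (simp add: t_def)
    have "(1 + t) * a + (1 + 1 / t) * b = a + sqrt b * sqrt a + b + sqrt a * sqrt b"
    proof -
      have sa: "sqrt a * sqrt a = a" using a by simp
      have sb: "sqrt b * sqrt b = b" using b by simp
      have sa0: "sqrt a \<noteq> 0" and sb0: "sqrt b \<noteq> 0" using a0 b0 by auto
      have "t * a = (sqrt b / sqrt a) * (sqrt a * sqrt a)" by (simp only: sa t_def)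
      also have "\<dots> = sqrt b * sqrt a" using sa0 by (simp add: field_simps)
      finally have "t * a = sqrt b * sqrt a" .
      moreover have "(1 / t) * b = (sqrt a / sqrt b) * (sqrt b * sqrt b)" by (simp only: sb t_def) simp
      moreover have "(sqrt a / sqrt b) * (sqrt b * sqrt b) = sqrt a * sqrt b" using sb0 by (simp add: field_simps)
      ultimately show ?thesis by (simp add: algebra_simps)
    qed
    also have "\<dots> = (sqrt a + sqrt b)^2" using a b by (simp add: power2_eq_square algebra_simps)
    finally have "c \<le> (sqrt a + sqrt b)^2" using H[OF t] by simp
    then have "sqrt c \<le> sqrt ((sqrt a + sqrt b)^2)" by (rule real_sqrt_le_mono)
    then show ?thesis using a b by simp
  qed
qed

definition Sc :: "('a::euclidean_space \<Rightarrow> real) \<Rightarrow> real \<Rightarrow> 'a \<Rightarrow> 'a" where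
  "Sc p \<gamma> y = (1 / py p \<gamma> y) *\<^sub>R dpy p \<gamma> y"

definition Fi :: "('a::euclidean_space \<Rightarrow> real) \<Rightarrow> 'a \<Rightarrow> 'a \<Rightarrow> real \<Rightarrow> 'a \<Rightarrow> real" where
  "Fi p x1 x2 \<gamma> w = gauss_dens \<gamma> w * (norm (Sc p \<gamma> (\<gamma> *\<^sub>R x1 + w) - Sc p \<gamma> (\<gamma> *\<^sub>R x2 + w)))\<^sup>2"

definition Ii :: "('a::euclidean_space \<Rightarrow> real) \<Rightarrow> 'a \<Rightarrow> 'a \<Rightarrow> real \<Rightarrow> ennreal" where
  "Ii p x1 x2 \<gamma> = (\<integral>\<^sup>+ w. ennreal (Fi p x1 x2 \<gamma> w) \<partial>lborel)"

lemma norm_tri_sq: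
  fixes a b c :: "'a::real_normed_vector"
  assumes t: "0 < t"
  shows "(norm (a - c))\<^sup>2 \<le> (1 + t) * (norm (a - b))\<^sup>2 + (1 + 1 / t) * (norm (b - c))\<^sup>2"
proof -
  define u where "u = norm (a - b)"
  define v where "v = norm (b - c)"
  have u: "0 \<le> u" and v: "0 \<le> v" by (auto simp: u_def v_def)
  have "norm (a - c) \<le> u + v" unfolding u_def v_def using norm_triangle_ineq[of "a - b" "b - c"] by simp
  then have "(norm (a - c))\<^sup>2 \<le> (u + v)\<^sup>2" by (rule power_mono) simp
  also have "(u + v)\<^sup>2 \<le> (1 + t) * u\<^sup>2 + (1 + 1 / t) * v\<^sup>2"
  proof -
    have "0 \<le> (t * u - v)\<^sup>2" by simp
    then have "2 * t * u * v \<le> t\<^sup>2 * u\<^sup>2 + v\<^sup>2" by (simp add: power2_eq_square algebra_simps)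
    moreover have "t * (t * u\<^sup>2 + v\<^sup>2 / t) = t\<^sup>2 * u\<^sup>2 + v\<^sup>2" using t by (simp add: power2_eq_square field_simps)
    ultimately have "t * (2 * u * v) \<le> t * (t * u\<^sup>2 + v\<^sup>2 / t)" by (simp add: mult_ac)
    then have "2 * u * v \<le> t * u\<^sup>2 + v\<^sup>2 / t" using t by (rule mult_left_le_imp_le)
    then show ?thesis by (simp add: power2_eq_square algebra_simps)
  qed
  finally show ?thesis by (simp add: u_def v_def)
qed

context dens
begin

lemma Sc_meas_raw[measurable (raw)]:
  "f \<in> borel_measurable M \<Longrightarrow> g \<in> borel_measurable M \<Longrightarrow> (\<lambda>x. Sc p (f x) (g x)) \<in> borel_measurable M"
proof -
  assume [measurable]: "f \<in> borel_measurable M" "g \<in> borel_measurable M"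
  show ?thesis unfolding Sc_def by measurable
qed

lemma Fi_meas_raw[measurable (raw)]:
  "f \<in> borel_measurable M \<Longrightarrow> g \<in> borel_measurable M \<Longrightarrow> (\<lambda>x. Fi p x1 x2 (f x) (g x)) \<in> borel_measurable M"
proof -
  assume [measurable]: "f \<in> borel_measurable M" "g \<in> borel_measurable M"
  show ?thesis unfolding Fi_def by measurable
qed

lemma Ii_meas[measurable]: "(\<lambda>\<gamma>. Ii p x1 x2 \<gamma>) \<in> borel_measurable lborel"
  unfolding Ii_def by measurable

lemma Fi_nonneg: "0 < \<gamma> \<Longrightarrow> 0 \<le> Fi p x1 x2 \<gamma> w"
  unfolding Fi_def using gauss_pos[of \<gamma> w] by simp

lemma IEM_sq_eq: "IEM_sq p x1 x2 \<Gamma> = (\<integral>\<^sup>+\<gamma>. Ii p x1 x2 \<gamma> \<partial>restrict_space lborel {0<..\<Gamma>})"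
  unfolding IEM_sq_def
proof (rule nn_integral_cong)
  fix \<gamma> assume "\<gamma> \<in> space (restrict_space lborel {0<..\<Gamma>})"
  then have g: "0 < \<gamma>" by simp
  show "(\<integral>\<^sup>+ w. ennreal (gauss_dens \<gamma> w * (norm (score p \<gamma> (\<gamma> *\<^sub>R x1 + w) - score p \<gamma> (\<gamma> *\<^sub>R x2 + w)))\<^sup>2) \<partial>lborel)
     = Ii p x1 x2 \<gamma>"
    unfolding Ii_def Fi_def Sc_def score_eq[OF g] ..
qed

lemma Ii_tri:
  assumes g: "0 < \<gamma>" and t: "0 < t"
  shows "Ii p x1 x3 \<gamma> \<le> ennreal (1 + t) * Ii p x1 x2 \<gamma> + ennreal (1 + 1 / t) * Ii p x2 x3 \<gamma>"
proof -
  have "Ii p x1 x3 \<gamma> \<le> (\<integral>\<^sup>+ w. ennreal (1 + t) * ennreal (Fi p x1 x2 \<gamma> w) + ennreal (1 + 1 / t) * ennreal (Fi p x2 x3 \<gamma> w) \<partial>lborel)"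
    unfolding Ii_def
  proof (rule nn_integral_mono)
    fix w :: 'a
    have "Fi p x1 x3 \<gamma> w \<le> (1 + t) * Fi p x1 x2 \<gamma> w + (1 + 1 / t) * Fi p x2 x3 \<gamma> w"
    proof -
      let ?a = "Sc p \<gamma> (\<gamma> *\<^sub>R x1 + w)" and ?b = "Sc p \<gamma> (\<gamma> *\<^sub>R x2 + w)" and ?c = "Sc p \<gamma> (\<gamma> *\<^sub>R x3 + w)"
      have "gauss_dens \<gamma> w * (norm (?a - ?c))\<^sup>2 \<le> gauss_dens \<gamma> w * ((1 + t) * (norm (?a - ?b))\<^sup>2 + (1 + 1 / t) * (norm (?b - ?c))\<^sup>2)"
        using gauss_pos[OF g, of w] norm_tri_sq[OF t] by (intro mult_left_mono) auto
      then show ?thesis unfolding Fi_def by (simp add: algebra_simps)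
    qed
    then have "ennreal (Fi p x1 x3 \<gamma> w) \<le> ennreal ((1 + t) * Fi p x1 x2 \<gamma> w + (1 + 1 / t) * Fi p x2 x3 \<gamma> w)"
      by (rule ennreal_leI)
    also have "\<dots> = ennreal (1 + t) * ennreal (Fi p x1 x2 \<gamma> w) + ennreal (1 + 1 / t) * ennreal (Fi p x2 x3 \<gamma> w)"
      using t Fi_nonneg[OF g] by (simp add: ennreal_plus ennreal_mult)
    finally show "ennreal (Fi p x1 x3 \<gamma> w) \<le> ennreal (1 + t) * ennreal (Fi p x1 x2 \<gamma> w) + ennreal (1 + 1 / t) * ennreal (Fi p x2 x3 \<gamma> w)" .
  qed
  also have "\<dots> = ennreal (1 + t) * Ii p x1 x2 \<gamma> + ennreal (1 + 1 / t) * Ii p x2 x3 \<gamma>"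
  proof -
    have m1: "(\<lambda>w. ennreal (1 + t) * ennreal (Fi p x1 x2 \<gamma> w)) \<in> borel_measurable lborel" by measurable
    have m2: "(\<lambda>w. ennreal (1 + 1 / t) * ennreal (Fi p x2 x3 \<gamma> w)) \<in> borel_measurable lborel" by measurable
    have m3: "(\<lambda>w. ennreal (Fi p x1 x2 \<gamma> w)) \<in> borel_measurable lborel" by measurable
    have m4: "(\<lambda>w. ennreal (Fi p x2 x3 \<gamma> w)) \<in> borel_measurable lborel" by measurable
    show ?thesis unfolding Ii_def nn_integral_add[OF m1 m2] nn_integral_cmult[OF m3] nn_integral_cmult[OF m4] ..
  qed
  finally show ?thesis .
qed

lemma IEM_sq_tri:
  assumes t: "0 < t"
  shows "IEM_sq p x1 x3 \<Gamma> \<le> ennreal (1 + t) * IEM_sq p x1 x2 \<Gamma> + ennreal (1 + 1 / t) * IEM_sq p x2 x3 \<Gamma>"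
proof -
  let ?R = "restrict_space lborel {0<..\<Gamma>}"
  have "IEM_sq p x1 x3 \<Gamma> \<le> (\<integral>\<^sup>+\<gamma>. ennreal (1 + t) * Ii p x1 x2 \<gamma> + ennreal (1 + 1 / t) * Ii p x2 x3 \<gamma> \<partial>?R)"
    unfolding IEM_sq_eq
  proof (rule nn_integral_mono)
    fix \<gamma> assume "\<gamma> \<in> space ?R"
    then have g: "0 < \<gamma>" by simp
    show "Ii p x1 x3 \<gamma> \<le> ennreal (1 + t) * Ii p x1 x2 \<gamma> + ennreal (1 + 1 / t) * Ii p x2 x3 \<gamma>"
      by (rule Ii_tri[OF g t])
  qed
  also have "\<dots> = ennreal (1 + t) * IEM_sq p x1 x2 \<Gamma> + ennreal (1 + 1 / t) * IEM_sq p x2 x3 \<Gamma>"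
  proof -
    have m3: "(\<lambda>\<gamma>. Ii p x1 x2 \<gamma>) \<in> borel_measurable ?R" by (rule measurable_restrict_space1) measurable
    have m4: "(\<lambda>\<gamma>. Ii p x2 x3 \<gamma>) \<in> borel_measurable ?R" by (rule measurable_restrict_space1) measurable
    have m1: "(\<lambda>\<gamma>. ennreal (1 + t) * Ii p x1 x2 \<gamma>) \<in> borel_measurable ?R" using m3 by measurable
    have m2: "(\<lambda>\<gamma>. ennreal (1 + 1 / t) * Ii p x2 x3 \<gamma>) \<in> borel_measurable ?R" using m4 by measurable
    show ?thesis unfolding IEM_sq_eq nn_integral_add[OF m1 m2] nn_integral_cmult[OF m3] nn_integral_cmult[OF m4] ..
  qed
  finally show ?thesis .
qed

lemma Sc_cont: "0 < \<gamma> \<Longrightarrow> continuous_on UNIV (Sc p \<gamma>)"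
proof -
  assume g: "0 < \<gamma>"
  have "Sc p \<gamma> = score p \<gamma>" by (auto simp: fun_eq_iff Sc_def score_eq[OF g])
  then show ?thesis using score_cont[OF g] by simp
qed

lemma IEM_sq_pos:
  assumes G: "0 < \<Gamma>" and ne: "x1 \<noteq> x2" and z: "IEM_sq p x1 x2 \<Gamma> = 0"
  shows False
proof -
  let ?R = "restrict_space lborel {0<..\<Gamma>}"
  have m: "(\<lambda>\<gamma>. Ii p x1 x2 \<gamma>) \<in> borel_measurable ?R" by (rule measurable_restrict_space1) measurable
  have "(\<integral>\<^sup>+\<gamma>. Ii p x1 x2 \<gamma> \<partial>?R) = 0" using z unfolding IEM_sq_eq .
  then have "AE \<gamma> in ?R. Ii p x1 x2 \<gamma> = 0" using nn_integral_0_iff_AE[OF m] by simp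
  then have ae: "AE \<gamma> in lborel. \<gamma> \<in> {0<..\<Gamma>} \<longrightarrow> Ii p x1 x2 \<gamma> = 0"
    by (subst (asm) AE_restrict_space_iff) auto
  obtain \<gamma> where g: "\<gamma> \<in> {0<..\<Gamma>}" and I0: "Ii p x1 x2 \<gamma> = 0"
  proof (rule ccontr)
    assume "\<not> thesis"
    then have "\<forall>\<gamma>\<in>{0<..\<Gamma>}. Ii p x1 x2 \<gamma> \<noteq> 0" using that by blast
    then have "AE \<gamma> in lborel. \<gamma> \<notin> {0<..\<Gamma>}" using ae by (auto elim: AE_mp)
    then have "emeasure lborel {0<..\<Gamma>} = 0"
      by (subst (asm) AE_iff_measurable[of "{0<..\<Gamma>}"]) auto
    then show False using G by simp
  qed
  have g0: "0 < \<gamma>" using g by simp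
  have mw: "(\<lambda>w. ennreal (Fi p x1 x2 \<gamma> w)) \<in> borel_measurable lborel" by measurable
  have "AE w in lborel. ennreal (Fi p x1 x2 \<gamma> w) = 0"
    using I0 nn_integral_0_iff_AE[OF mw] unfolding Ii_def by simp
  then have ae2: "AE w in lborel. Sc p \<gamma> (\<gamma> *\<^sub>R x1 + w) = Sc p \<gamma> (\<gamma> *\<^sub>R x2 + w)"
  proof (rule AE_mp, intro AE_I2 impI)
    fix w assume "ennreal (Fi p x1 x2 \<gamma> w) = 0"
    then have "Fi p x1 x2 \<gamma> w \<le> 0" by (simp add: ennreal_eq_0_iff)
    then have "(norm (Sc p \<gamma> (\<gamma> *\<^sub>R x1 + w) - Sc p \<gamma> (\<gamma> *\<^sub>R x2 + w)))\<^sup>2 \<le> 0"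
      using gauss_pos[OF g0, of w] unfolding Fi_def by (simp add: mult_le_0_iff)
    then show "Sc p \<gamma> (\<gamma> *\<^sub>R x1 + w) = Sc p \<gamma> (\<gamma> *\<^sub>R x2 + w)" by simp
  qed
  have c1: "continuous_on UNIV (\<lambda>w. Sc p \<gamma> (\<gamma> *\<^sub>R x1 + w))"
    by (rule continuous_on_compose2[OF Sc_cont[OF g0]]) (auto intro!: continuous_intros)
  have c2: "continuous_on UNIV (\<lambda>w. Sc p \<gamma> (\<gamma> *\<^sub>R x2 + w))"
    by (rule continuous_on_compose2[OF Sc_cont[OF g0]]) (auto intro!: continuous_intros)
  have all: "Sc p \<gamma> (\<gamma> *\<^sub>R x1 + w) = Sc p \<gamma> (\<gamma> *\<^sub>R x2 + w)" for w
    by (rule cont_ae_eq[OF c1 c2 ae2])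
  have "score p \<gamma> (y + \<gamma> *\<^sub>R (x1 - x2)) = score p \<gamma> y" for y
  proof -
    have "score p \<gamma> (y + \<gamma> *\<^sub>R (x1 - x2)) = Sc p \<gamma> (\<gamma> *\<^sub>R x1 + (y - \<gamma> *\<^sub>R x2))"
      by (simp add: Sc_def score_eq[OF g0] algebra_simps)
    also have "\<dots> = Sc p \<gamma> (\<gamma> *\<^sub>R x2 + (y - \<gamma> *\<^sub>R x2))" by (rule all)
    also have "\<dots> = score p \<gamma> y" by (simp add: Sc_def score_eq[OF g0])
    finally show ?thesis .
  qed
  moreover have "x1 - x2 \<noteq> 0" using ne by simp
  ultimately show False using no_periodic_score[OF g0] by blast
qed

end

theorem theorem1:
  fixes p :: "'a::euclidean_space \<Rightarrow> real" and \<Gamma> :: real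
  assumes "is_density p"
    and "\<And>x1 x2. IEM_sq p x1 x2 \<Gamma> < \<infinity>"
    and "0 < \<Gamma>"
  shows "\<forall>x1 x2 x3.
           IEM p x1 x2 \<Gamma> = IEM p x2 x1 \<Gamma>
         \<and> IEM p x1 x2 \<Gamma> \<ge> 0
         \<and> (IEM p x1 x2 \<Gamma> = 0 \<longleftrightarrow> x1 = x2)
         \<and> IEM p x1 x3 \<Gamma> \<le> IEM p x1 x2 \<Gamma> + IEM p x2 x3 \<Gamma>"
proof (intro allI conjI)
  interpret dens p by standard (rule assms(1))
  define Q where "Q x1 x2 = enn2real (IEM_sq p x1 x2 \<Gamma>)" for x1 x2
  have fin: "IEM_sq p x1 x2 \<Gamma> = ennreal (Q x1 x2)" for x1 x2
    unfolding Q_def using assms(2)[of x1 x2] by (simp add: ennreal_enn2real less_top)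
  have Q0: "0 \<le> Q x1 x2" for x1 x2 by (simp add: Q_def)
  have IEMQ: "IEM p x1 x2 \<Gamma> = sqrt (Q x1 x2)" for x1 x2 by (simp add: IEM_def Q_def)
  fix x1 x2 x3 :: 'a
  have "IEM_sq p x1 x2 \<Gamma> = IEM_sq p x2 x1 \<Gamma>"
    unfolding IEM_sq_def by (simp add: norm_minus_commute)
  then show "IEM p x1 x2 \<Gamma> = IEM p x2 x1 \<Gamma>" by (simp add: IEM_def)
  show "IEM p x1 x2 \<Gamma> \<ge> 0" by (simp add: IEM_def)
  show "IEM p x1 x2 \<Gamma> = 0 \<longleftrightarrow> x1 = x2"
  proof
    assume "IEM p x1 x2 \<Gamma> = 0"
    then have "Q x1 x2 = 0" using Q0[of x1 x2] by (simp add: IEMQ)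
    then have "IEM_sq p x1 x2 \<Gamma> = 0" by (simp add: fin)
    then show "x1 = x2" using IEM_sq_pos[OF assms(3)] by blast
  next
    assume "x1 = x2"
    then have "IEM_sq p x1 x2 \<Gamma> = 0" by (simp add: IEM_sq_def)
    then show "IEM p x1 x2 \<Gamma> = 0" by (simp add: IEM_def)
  qed
  have "sqrt (Q x1 x3) \<le> sqrt (Q x1 x2) + sqrt (Q x2 x3)"
  proof (rule sqrt_tri_real[OF Q0 Q0 Q0])
    fix t :: real assume t: "0 < t"
    have "IEM_sq p x1 x3 \<Gamma> \<le> ennreal (1 + t) * IEM_sq p x1 x2 \<Gamma> + ennreal (1 + 1 / t) * IEM_sq p x2 x3 \<Gamma>"
      by (rule IEM_sq_tri[OF t])
    then have "ennreal (Q x1 x3) \<le> ennreal (1 + t) * ennreal (Q x1 x2) + ennreal (1 + 1 / t) * ennreal (Q x2 x3)"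
      by (simp only: fin)
    also have "\<dots> = ennreal ((1 + t) * Q x1 x2 + (1 + 1 / t) * Q x2 x3)"
      using t Q0 by (simp add: ennreal_mult ennreal_plus)
    finally show "Q x1 x3 \<le> (1 + t) * Q x1 x2 + (1 + 1 / t) * Q x2 x3"
      using t Q0 by (subst (asm) ennreal_le_iff) (auto intro!: add_nonneg_nonneg mult_nonneg_nonneg)
  qed
  then show "IEM p x1 x3 \<Gamma> \<le> IEM p x1 x2 \<Gamma> + IEM p x2 x3 \<Gamma>" by (simp add: IEMQ)
qed

end
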